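(* The kernel of the linear operator $L$ acting on $L^2(\mathbb{R}^3_v)^2$ is \[ \operatorname{Ker}L=\operatorname{span}\{(\sqrt{\mu_1},0),(0,\sqrt{\mu_2}),(m_1v_j\sqrt{\mu_1},m_2v_j\sqrt{\mu_2})\ (j=1,2,3),((m_1|v|^2-3)\sqrt{\mu_1},(m_2|v|^2-3)\sqrt{\mu_2})\}. \]
   Context: $m_1\ge m_2>0$, $n_{10},n_{20}>0$, $0\le\delta<1$, $0\le\omega<1$. $\mu_k(v)=n_{k0}(\frac{m_k}{2\pi})^{3/2}e^{-m_k|v|^2/2}$. Orthonormal functions in $L^2(\mathbb{R}^3_v)$: $e_{k1}=\frac{\sqrt{\mu_k}}{\sqrt{n_{k0}}}$, $e_{ki}=\sqrt{\frac{m_k}{n_{k0}}}v_{i-1}\sqrt{\mu_k}$ ($i=2,3,4$), $e_{k5}=\frac{m_k|v|^2-3}{\sqrt{6n_{k0}}}\sqrt{\mu_k}$; $P_kf=\sum_{i=1}^5\langle f,e_{ki}\rangle_{L^2_v}e_{ki}$ with $\langle f,g\rangle_{L^2_v}=\int fg\,dv$. $L_{kk}(f_k)=n_{k0}(P_kf_k-f_k)$; $L_{12}(f_1,f_2)=n_{20}(P_1f_1-f_1)+n_{20}\big[(1-\delta)\sum_{i=2}^4(\sqrt{\frac{n_{10}}{n_{20}}}\sqrt{\frac{m_1}{m_2}}\langle f_2,e_{2i}\rangle_{L^2_v}-\langle f_1,e_{1i}\rangle_{L^2_v})e_{1i}+(1-\omega)(\sqrt{\frac{n_{10}}{n_{20}}}\langle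 f_2,e_{25}\rangle_{L^2_v}-\langle f_1,e_{15}\rangle_{L^2_v})e_{15}\big]$; $L_{21}(f_1,f_2)=n_{10}(P_2f_2-f_2)+n_{10}\big[\frac{m_1}{m_2}(1-\delta)\sum_{i=2}^4(\sqrt{\frac{n_{20}}{n_{10}}}\sqrt{\frac{m_2}{m_1}}\langle f_1,e_{1i}\rangle_{L^2_v}-\langle f_2,e_{2i}\rangle_{L^2_v})e_{2i}+(1-\omega)(\sqrt{\frac{n_{20}}{n_{10}}}\langle f_1,e_{15}\rangle_{L^2_v}-\langle f_2,e_{25}\rangle_{L^2_v})e_{25}\big]$; $L(f_1,f_2)=(L_{11}(f_1)+L_{12}(f_1,f_2),\,L_{22}(f_2)+L_{21}(f_1,f_2))$. *)

theory Defs
  imports "HOL-Analysis.Analysis"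
begin

definition Maxw :: "real \<Rightarrow> real \<Rightarrow> real^3 \<Rightarrow> real" where
  "Maxw m n v = n * (m / (2 * pi)) powr (3/2) * exp (- m * (norm v)\<^sup>2 / 2)"

definition ip :: "(real^3 \<Rightarrow> real) \<Rightarrow> (real^3 \<Rightarrow> real) \<Rightarrow> real" where
  "ip f g = (LINT v|lborel. f v * g v)"

definition sq_integrable :: "(real^3 \<Rightarrow> real) \<Rightarrow> bool" where
  "sq_integrable f \<longleftrightarrow> f \<in> borel_measurable lborel \<and> integrable lborel (\<lambda>v. (f v)\<^sup>2)"

text \<open>Orthonormal functions: e_{k1}, e_{k,j+1} (j = 1,2,3), e_{k5}.\<close>
definition eA :: "real \<Rightarrow> real \<Rightarrow> real^3 \<Rightarrow> real" where
  "eA m n v = sqrt (Maxw m n v) / sqrt n"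

definition eV :: "real \<Rightarrow> real \<Rightarrow> 3 \<Rightarrow> real^3 \<Rightarrow> real" where
  "eV m n j v = sqrt (m / n) * v $ j * sqrt (Maxw m n v)"

definition eE :: "real \<Rightarrow> real \<Rightarrow> real^3 \<Rightarrow> real" where
  "eE m n v = (m * (norm v)\<^sup>2 - 3) / sqrt (6 * n) * sqrt (Maxw m n v)"

definition Proj :: "real \<Rightarrow> real \<Rightarrow> (real^3 \<Rightarrow> real) \<Rightarrow> real^3 \<Rightarrow> real" where
  "Proj m n f v = ip f (eA m n) * eA m n v
     + (\<Sum>j\<in>UNIV. ip f (eV m n j) * eV m n j v)
     + ip f (eE m n) * eE m n v"

definition Lop1 :: "real \<Rightarrow> real \<Rightarrow> real \<Rightarrow> real \<Rightarrow> real \<Rightarrow> real \<Rightarrow>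
    (real^3 \<Rightarrow> real) \<Rightarrow> (real^3 \<Rightarrow> real) \<Rightarrow> real^3 \<Rightarrow> real" where
  "Lop1 m1 m2 n10 n20 \<delta> \<omega> f1 f2 v =
     n10 * (Proj m1 n10 f1 v - f1 v)
     + n20 * (Proj m1 n10 f1 v - f1 v)
     + n20 * ((1 - \<delta>) * (\<Sum>j\<in>UNIV.
            (sqrt (n10 / n20) * sqrt (m1 / m2) * ip f2 (eV m2 n20 j) - ip f1 (eV m1 n10 j))
              * eV m1 n10 j v)
          + (1 - \<omega>) * (sqrt (n10 / n20) * ip f2 (eE m2 n20) - ip f1 (eE m1 n10)) * eE m1 n10 v)"

definition Lop2 :: "real \<Rightarrow> real \<Rightarrow> real \<Rightarrow> real \<Rightarrow> real \<Rightarrow> real \<Rightarrow>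
    (real^3 \<Rightarrow> real) \<Rightarrow> (real^3 \<Rightarrow> real) \<Rightarrow> real^3 \<Rightarrow> real" where
  "Lop2 m1 m2 n10 n20 \<delta> \<omega> f1 f2 v =
     n20 * (Proj m2 n20 f2 v - f2 v)
     + n10 * (Proj m2 n20 f2 v - f2 v)
     + n10 * (m1 / m2 * (1 - \<delta>) * (\<Sum>j\<in>UNIV.
            (sqrt (n20 / n10) * sqrt (m2 / m1) * ip f1 (eV m1 n10 j) - ip f2 (eV m2 n20 j))
              * eV m2 n20 j v)
          + (1 - \<omega>) * (sqrt (n20 / n10) * ip f1 (eE m1 n10) - ip f2 (eE m2 n20)) * eE m2 n20 v)"

end

theory Submission
  imports Defs "HOL-Probability.Probability"
begin


lemma Basis_vec_range: "(Basis :: (real^'n) set) = range (\<lambda>j. axis j 1)"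
  unfolding Basis_vec_def by auto

lemma vec_basis_comp:
  fixes x :: "(real^'n) \<Rightarrow> real"
  shows "(\<Sum>b\<in>Basis. x b *\<^sub>R b) $ j = x (axis j 1)"
proof -
  have "(\<Sum>b\<in>Basis. x b *\<^sub>R b) $ j = (\<Sum>b\<in>Basis. x b *\<^sub>R b) \<bullet> axis j 1"
    by (simp add: inner_axis)
  also have "\<dots> = (\<Sum>b\<in>Basis. x b * (b \<bullet> axis j 1))"
    by (simp add: inner_sum_left)
  also have "\<dots> = x (axis j 1)"
    by (subst sum.remove[of _ "axis j 1"]) (auto simp: inner_Basis Basis_vec_range intro!: sum.neutral)
  finally show ?thesis .
qed


lemma inj_axis1: "inj (\<lambda>j::'n::finite. axis j (1::real))"
  by (auto simp: inj_def axis_eq_axis)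

lemma prod_integral_vec:
  fixes f :: "'n::finite \<Rightarrow> real \<Rightarrow> real"
  assumes int: "\<And>j. integrable lborel (f j)"
  shows "has_bochner_integral lborel (\<lambda>v::real^'n. \<Prod>j\<in>UNIV. f j (v$j)) (\<Prod>j\<in>UNIV. integral\<^sup>L lborel (f j))"
proof -
  define F where "F = (\<lambda>b::real^'n. f (inv (\<lambda>j. axis j (1::real)) b))"
  have Fax: "F (axis j 1) = f j" for j
    unfolding F_def using inv_f_f[OF inj_axis1, of j] by simp
  have meas[measurable]: "f j \<in> borel_measurable borel" for j
    using int by auto
  have gmeas: "(\<lambda>v::real^'n. \<Prod>j\<in>UNIV. f j (v$j)) \<in> borel_measurable borel"
    by measurable
  interpret P: product_sigma_finite "\<lambda>_. lborel :: real measure"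
    by standard
  have eq: "(\<Prod>j\<in>UNIV. f j ((\<Sum>b\<in>Basis. x b *\<^sub>R b) $ j)) = (\<Prod>b\<in>Basis. F b (x b))" for x :: "real^'n \<Rightarrow> real"
  proof -
    have "(\<Prod>b\<in>Basis. F b (x b)) = (\<Prod>j\<in>UNIV. F (axis j 1) (x (axis j 1)))"
      unfolding Basis_vec_range by (subst prod.reindex[OF inj_axis1]) simp
    then show ?thesis unfolding vec_basis_comp by (simp add: Fax)
  qed
  have Fint: "integrable lborel (F b)" for b unfolding F_def by (rule int)
  have i1: "integrable (\<Pi>\<^sub>M b\<in>Basis. lborel) (\<lambda>x. \<Prod>b\<in>(Basis::(real^'n) set). F b (x b))"
    by (rule P.product_integrable_prod) (auto intro: Fint)
  have i2: "integral\<^sup>L (\<Pi>\<^sub>M b\<in>Basis. lborel) (\<lambda>x. \<Prod>b\<in>(Basis::(real^'n) set). F b (x b)) = (\<Prod>b\<in>Basis. integral\<^sup>L lborel (F b))"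
    by (rule P.product_integral_prod) (auto intro: Fint)
  have i3: "(\<Prod>b\<in>(Basis::(real^'n) set). integral\<^sup>L lborel (F b)) = (\<Prod>j\<in>UNIV. integral\<^sup>L lborel (f j))"
    unfolding Basis_vec_range by (subst prod.reindex[OF inj_axis1]) (simp add: Fax)
  have T: "(\<lambda>f. \<Sum>b\<in>Basis. f b *\<^sub>R b) \<in> measurable (\<Pi>\<^sub>M b\<in>(Basis::(real^'n) set). lborel) (borel :: (real^'n) measure)"
    by measurable
  show ?thesis
    unfolding has_bochner_integral_iff
    apply (subst (1 2) lborel_eq)
    apply (subst integrable_distr_eq[OF T gmeas])
    apply (subst integral_distr[OF T gmeas])
    unfolding eq using i1 i2 i3 by simp
qed

definition gM :: "real \<Rightarrow> nat \<Rightarrow> real" where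
  "gM m k = integral\<^sup>L lborel (\<lambda>x. normal_density 0 (1 / sqrt m) x * x ^ k)"

lemma gM_int: "m > 0 \<Longrightarrow> integrable lborel (\<lambda>x. normal_density 0 (1 / sqrt m) x * x ^ k)"
  using integrable_normal_moment[where \<mu>=0 and \<sigma>="1 / sqrt m" and k=k] by simp

lemma gM_0: "m > 0 \<Longrightarrow> gM m 0 = 1"
  unfolding gM_def by simp

lemma gM_odd: "m > 0 \<Longrightarrow> gM m (2*k+1) = 0"
  unfolding gM_def using integral_normal_moment_odd[where \<mu>=0 and \<sigma>="1 / sqrt m" and k=k] by simp

lemma gM_1: "m > 0 \<Longrightarrow> gM m 1 = 0" using gM_odd[of m 0] by simp
lemma gM_3: "m > 0 \<Longrightarrow> gM m 3 = 0" using gM_odd[of m 1] by simp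

lemma gM_2: "m > 0 \<Longrightarrow> gM m 2 = 1 / m"
  unfolding gM_def using integral_normal_moment_even[where \<mu>=0 and \<sigma>="1 / sqrt m" and k=1]
  by (simp add: power_divide)

lemma gM_4: "m > 0 \<Longrightarrow> gM m 4 = 3 / m^2"
  unfolding gM_def using integral_normal_moment_even[where \<mu>=0 and \<sigma>="1 / sqrt m" and k=2]
  by (simp add: power_divide fact_numeral power2_eq_square)

lemma prod_3': "prod f (UNIV::3 set) = f 1 * f 2 * f 3"
  unfolding UNIV_3 by (simp add: ac_simps)

lemma gMs: "m > 0 \<Longrightarrow> gM m (Suc 0) = 0" "m > 0 \<Longrightarrow> gM m (Suc (Suc 0)) = 1 / m"
  "m > 0 \<Longrightarrow> gM m (Suc (Suc (Suc 0))) = 0" "m > 0 \<Longrightarrow> gM m (Suc (Suc (Suc (Suc 0)))) = 3 / m^2"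
  using gM_1[of m] gM_2[of m] gM_3[of m] gM_4[of m] by (simp_all add: numeral_eq_Suc)

lemma Maxw_prod:
  assumes "m > 0"
  shows "Maxw m n v = n * (\<Prod>j\<in>UNIV. normal_density 0 (1 / sqrt m) (v $ j))"
proof -
  have nd: "normal_density 0 (1 / sqrt m) x = sqrt (m / (2*pi)) * exp (- m * x^2 / 2)" for x
    using assms by (simp add: normal_density_def power_divide real_sqrt_divide real_sqrt_mult field_simps)
  have n2: "(norm v)^2 = (\<Sum>j\<in>UNIV. (v$j)^2)"
    by (simp add: norm_vec_def L2_set_def sum_nonneg)
  have pw: "(m / (2 * pi)) powr (3/2) = sqrt (m / (2*pi)) ^ 3"
    using assms by (simp add: powr_half_sqrt[symmetric] powr_realpow[symmetric] powr_powr)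
  have ex: "exp (- m * (a + b + c) / 2) = exp (- m * a / 2) * (exp (- m * b / 2) * exp (- m * c / 2))" for a b c
    unfolding exp_add[symmetric] by (rule arg_cong[where f=exp]) (simp add: field_simps)
  have s3: "(\<Sum>j\<in>UNIV. (v$j)^2) = (v$1)^2 + (v$2)^2 + (v$3)^2"
    by (simp add: sum_3)
  show ?thesis
    by (simp only: Maxw_def nd n2 s3 pw prod_3' ex) (simp only: power3_eq_cube mult_ac)
qed

lemma mono_mom:
  assumes m: "m > 0"
  shows "has_bochner_integral lborel (\<lambda>v::real^3. (\<Prod>j\<in>UNIV. (v$j)^(e j)) * Maxw m n v)
           (n * (\<Prod>j\<in>UNIV. gM m (e j)))"
proof -
  have "has_bochner_integral lborel (\<lambda>v::real^3. \<Prod>j\<in>UNIV. normal_density 0 (1 / sqrt m) (v$j) * (v$j)^(e j))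
          (\<Prod>j\<in>UNIV. gM m (e j))"
    unfolding gM_def by (rule prod_integral_vec) (rule gM_int[OF m])
  then have "has_bochner_integral lborel (\<lambda>v::real^3. n * (\<Prod>j\<in>UNIV. normal_density 0 (1 / sqrt m) (v$j) * (v$j)^(e j)))
          (n * (\<Prod>j\<in>UNIV. gM m (e j)))"
    by (rule has_bochner_integral_mult_right)
  then show ?thesis
    by (rule has_bochner_integral_cong[THEN iffD1, rotated 3])
       (simp_all add: Maxw_prod[OF m] prod.distrib)
qed

lemma gM_if: "gM m (if P then a else b) = (if P then gM m a else gM m b)"
  by simp

lemma mom_delta:
  assumes m: "m > 0"
  shows "has_bochner_integral lborel (\<lambda>v::real^3. (v$i)^a * (v$j)^b * Maxw m n v)
           (n * (\<Prod>l\<in>UNIV. gM m ((if l = i then a else 0) + (if l = j then b else 0))))"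
proof -
  have "(\<Prod>l\<in>UNIV. (v$l)^((if l = i then a else 0) + (if l = j then b else 0))) = (v$i)^a * (v$j)^b" for v :: "real^3"
  proof -
    have "(\<Prod>l\<in>UNIV. (v$l)^((if l = i then a else 0) + (if l = j then b else 0)))
       = (\<Prod>l\<in>UNIV. (if l = i then (v$l)^a else 1) * (if l = j then (v$l)^b else 1))"
      by (intro prod.cong) (auto simp: power_add)
    also have "\<dots> = (v$i)^a * (v$j)^b"
      by (simp add: prod.distrib prod.delta')
    finally show ?thesis .
  qed
  then show ?thesis
    using mono_mom[OF m, of "\<lambda>l. (if l = i then a else 0) + (if l = j then b else 0)" n] by simp
qed

lemma mom_const: "m > 0 \<Longrightarrow> has_bochner_integral lborel (\<lambda>v::real^3. Maxw m n v) n"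
  using mom_delta[of m i 0 i 0 n] by (simp add: gM_0)

lemma mom_lin: "m > 0 \<Longrightarrow> has_bochner_integral lborel (\<lambda>v::real^3. v$i * Maxw m n v) 0"
proof -
  assume m: "m > 0"
  have "(\<Prod>l\<in>UNIV. gM m ((if l = i then 1 else 0) + (if l = i then 0 else 0))) = 0"
    by (rule prod_zero) (auto intro!: bexI[of _ i] simp: gM_1 gMs m)
  note P = this
  show ?thesis using mom_delta[OF m, of i 1 i 0 n] unfolding P by simp
qed

lemma mom_quad: "m > 0 \<Longrightarrow> has_bochner_integral lborel (\<lambda>v::real^3. v$i * v$j * Maxw m n v) (if i = j then n / m else 0)"
proof -
  assume m: "m > 0"
  have "(\<Prod>l\<in>UNIV. gM m ((if l = i then 1 else 0) + (if l = j then 1 else 0))) = (if i = j then 1 / m else 0)"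
  proof (cases "i = j")
    case True
    then have "(\<Prod>l\<in>UNIV. gM m ((if l = i then 1 else 0) + (if l = j then 1 else 0))) = (\<Prod>l\<in>UNIV. if l = i then gM m 2 else 1)"
      by (intro prod.cong) (auto simp: gM_0 gMs gM_2 gM_4 m)
    then show ?thesis using True by (simp add: prod.delta' gM_2 m)
  next
    case False
    have "(\<Prod>l\<in>UNIV. gM m ((if l = i then 1 else 0) + (if l = j then 1 else 0))) = 0"
      using False by (intro prod_zero) (auto intro!: bexI[of _ i] simp: gM_1 gMs m)
    then show ?thesis using False by simp
  qed
  note P = this
  have Q: "n * (if i = j then 1 / m else 0) = (if i = j then n / m else 0)" by simp
  show ?thesis using mom_delta[OF m, of i 1 j 1 n] unfolding P Q by simp
qed

lemma mom_cub: "m > 0 \<Longrightarrow> has_bochner_integral lborel (\<lambda>v::real^3. v$i * (v$j)^2 * Maxw m n v) 0"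
proof -
  assume m: "m > 0"
  have "(\<Prod>l\<in>UNIV. gM m ((if l = i then 1 else 0) + (if l = j then 2 else 0))) = 0"
    by (rule prod_zero) (auto intro!: bexI[of _ i] simp: gM_1 gM_3 gMs m)
  note P = this
  show ?thesis using mom_delta[OF m, of i 1 j 2 n] unfolding P by simp
qed

lemma mom_quart: "m > 0 \<Longrightarrow> has_bochner_integral lborel (\<lambda>v::real^3. (v$i)^2 * (v$j)^2 * Maxw m n v) (if i = j then 3 * n / m^2 else n / m^2)"
proof -
  assume m: "m > 0"
  have "(\<Prod>l\<in>UNIV. gM m ((if l = i then 2 else 0) + (if l = j then 2 else 0))) = (if i = j then 3 / m^2 else 1 / m^2)"
  proof (cases "i = j")
    case True
    then have "(\<Prod>l\<in>UNIV. gM m ((if l = i then 2 else 0) + (if l = j then 2 else 0))) = (\<Prod>l\<in>UNIV. if l = i then gM m 4 else 1)"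
      by (intro prod.cong) (auto simp: gM_0 gMs gM_2 gM_4 m)
    then show ?thesis using True by (simp add: prod.delta' gM_4 m)
  next
    case False
    then have "(\<Prod>l\<in>UNIV. gM m ((if l = i then 2 else 0) + (if l = j then 2 else 0))) = (\<Prod>l\<in>UNIV. (if l = i then gM m 2 else 1) * (if l = j then gM m 2 else 1))"
      by (intro prod.cong) (auto simp: gM_0 gMs gM_2 gM_4 m)
    then show ?thesis using False by (simp add: prod.distrib prod.delta' gM_2 m power2_eq_square)
  qed
  note P = this
  have Q: "n * (if i = j then 3 / m^2 else 1 / m^2) = (if i = j then 3 * n / m^2 else n / m^2)" by simp
  show ?thesis using mom_delta[OF m, of i 2 j 2 n] unfolding P Q .
qed

lemma norm2_sum: "(norm (v::real^3))^2 = (\<Sum>k\<in>UNIV. (v$k)^2)"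
  by (simp add: norm_vec_def L2_set_def sum_nonneg)

lemma mom_n2: "m > 0 \<Longrightarrow> has_bochner_integral lborel (\<lambda>v::real^3. (norm v)^2 * Maxw m n v) (3 * n / m)"
proof -
  assume m: "m > 0"
  have "has_bochner_integral lborel (\<lambda>v::real^3. \<Sum>k\<in>UNIV. v$k * v$k * Maxw m n v) (\<Sum>k\<in>(UNIV::3 set). n / m)"
  proof (rule has_bochner_integral_sum)
    fix k :: 3
    show "has_bochner_integral lborel (\<lambda>v::real^3. v$k * v$k * Maxw m n v) (n / m)"
      using mom_quad[OF m, of k k n] by simp
  qed
  then show ?thesis
    unfolding norm2_sum by (simp add: sum_distrib_right power2_eq_square)
qed

lemma mom_n2lin: "m > 0 \<Longrightarrow> has_bochner_integral lborel (\<lambda>v::real^3. v$i * (norm v)^2 * Maxw m n v) 0"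
proof -
  assume m: "m > 0"
  have "has_bochner_integral lborel (\<lambda>v::real^3. \<Sum>k\<in>UNIV. v$i * (v$k)^2 * Maxw m n v) (\<Sum>k\<in>(UNIV::3 set). 0)"
    by (rule has_bochner_integral_sum) (use mom_cub[OF m, of i _ n] in simp)
  then show ?thesis
    by (simp add: norm2_sum sum_distrib_right sum_distrib_left mult.assoc)
qed

lemma mom_n4: "m > 0 \<Longrightarrow> has_bochner_integral lborel (\<lambda>v::real^3. ((norm v)^2)^2 * Maxw m n v) (15 * n / m^2)"
proof -
  assume m: "m > 0"
  have "has_bochner_integral lborel (\<lambda>v::real^3. \<Sum>k\<in>UNIV. \<Sum>l\<in>UNIV. (v$k)^2 * (v$l)^2 * Maxw m n v)
     (\<Sum>k\<in>(UNIV::3 set). \<Sum>l\<in>(UNIV::3 set). if k = l then 3 * n / m^2 else n / m^2)"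
    by (intro has_bochner_integral_sum mom_quart[OF m])
  moreover have "(\<Sum>k\<in>(UNIV::3 set). \<Sum>l\<in>(UNIV::3 set). if k = l then 3 * n / m^2 else n / m^2) = 15 * n / m^2"
    by (simp add: sum_3 field_simps)
  moreover have "((norm v)^2)^2 * Maxw m n v = (\<Sum>k\<in>UNIV. \<Sum>l\<in>UNIV. (v$k)^2 * (v$l)^2 * Maxw m n v)" for v :: "real^3"
    unfolding norm2_sum by (simp add: power2_eq_square sum_distrib_right sum_distrib_left mult_ac)
  ultimately show ?thesis by simp
qed



lemma Maxw_nonneg: "n \<ge> 0 \<Longrightarrow> Maxw m n v \<ge> 0"
  unfolding Maxw_def by simp

lemma sqrtM: "n \<ge> 0 \<Longrightarrow> sqrt (Maxw m n v) * sqrt (Maxw m n v) = Maxw m n v"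
  using Maxw_nonneg[of n m v] by simp

lemma hbi_scale:
  fixes f g :: "'a \<Rightarrow> real"
  assumes "has_bochner_integral M f x" "\<And>v. g v = c * f v" "y = c * x"
  shows "has_bochner_integral M g y"
proof -
  have "has_bochner_integral M (\<lambda>v. c * f v) (c * x)"
    by (intro has_bochner_integral_mult_right assms(1))
  moreover have "g = (\<lambda>v. c * f v)" using assms(2) by auto
  ultimately show ?thesis using assms(3) by simp
qed

lemma meas_e:
  shows "eA m n \<in> borel_measurable lborel" "eV m n j \<in> borel_measurable lborel" "eE m n \<in> borel_measurable lborel"
  unfolding eA_def eV_def eE_def Maxw_def by measurable

lemma alg_EE:
  fixes S M N m n :: real
  assumes "S * S = M" "n > 0"
  shows "((m*N-3)/sqrt(6*n)*S) * ((m*N-3)/sqrt(6*n)*S) = 1/(6*n) * (m^2*(N^2*M) - 6*m*(N*M) + 9*M)"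
proof -
  have q: "sqrt (6*n) * sqrt (6*n) = 6 * n" using assms by simp
  have "((m*N-3)/sqrt(6*n)*S) * ((m*N-3)/sqrt(6*n)*S) = (m*N-3)*(m*N-3) * (S*S) / (sqrt (6*n) * sqrt (6*n))"
    by (simp add: field_simps)
  also have "\<dots> = (m*N-3)*(m*N-3) * M / (6*n)" using q assms by simp
  also have "\<dots> = 1/(6*n) * (m^2*(N^2*M) - 6*m*(N*M) + 9*M)"
    by (simp add: field_simps power2_eq_square)
  finally show ?thesis .
qed

lemma alg_AE:
  fixes S M N m n :: real
  assumes "S * S = M" "n > 0"
  shows "(S / sqrt n) * ((m*N-3)/sqrt(6*n)*S) = 1 / (sqrt n * sqrt (6 * n)) * (m * (N * M) - 3 * M)"
proof -
  have "(S / sqrt n) * ((m*N-3)/sqrt(6*n)*S) = (m*N-3) * (S*S) / (sqrt n * sqrt (6 * n))"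
    by (simp add: field_simps)
  also have "\<dots> = 1 / (sqrt n * sqrt (6 * n)) * (m * (N * M) - 3 * M)"
    using assms by (simp add: field_simps)
  finally show ?thesis .
qed

lemma alg_VE:
  fixes S M N m n x :: real
  assumes "S * S = M" "n > 0"
  shows "(sqrt (m/n) * x * S) * ((m*N-3)/sqrt(6*n)*S) = sqrt (m / n) / sqrt (6 * n) * (m * (x * N * M) - 3 * (x * M))"
proof -
  have "(sqrt (m/n) * x * S) * ((m*N-3)/sqrt(6*n)*S) = sqrt (m/n) * x * (m*N-3) * (S*S) / sqrt (6 * n)"
    by (simp add: field_simps)
  also have "\<dots> = sqrt (m / n) / sqrt (6 * n) * (m * (x * N * M) - 3 * (x * M))"
    using assms by (simp add: field_simps)
  finally show ?thesis .
qed

lemma alg_VV: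
  fixes S M m n x y :: real
  assumes "S * S = M" "n > 0" "m > 0"
  shows "(sqrt (m/n) * x * S) * (sqrt (m/n) * y * S) = m / n * (x * y * M)"
proof -
  have "(sqrt (m/n) * x * S) * (sqrt (m/n) * y * S) = (sqrt (m/n) * sqrt (m/n)) * x * y * (S*S)"
    by (simp add: field_simps)
  also have "\<dots> = m / n * (x * y * M)"
    using assms by simp
  finally show ?thesis .
qed

lemma lin_ip:
  fixes f g A E :: "real^3 \<Rightarrow> real" and V :: "3 \<Rightarrow> real^3 \<Rightarrow> real"
  assumes f: "f \<in> borel_measurable lborel" and g: "g \<in> borel_measurable lborel"
    and mA: "A \<in> borel_measurable lborel" and mV: "\<And>j. V j \<in> borel_measurable lborel"
    and mE: "E \<in> borel_measurable lborel"
    and hA: "has_bochner_integral lborel (\<lambda>v. A v * g v) IA"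
    and hV: "\<And>j. has_bochner_integral lborel (\<lambda>v. V j v * g v) (IV j)"
    and hE: "has_bochner_integral lborel (\<lambda>v. E v * g v) IE"
    and ae: "AE v in lborel. f v = a * A v + (\<Sum>j\<in>UNIV. c j * V j v) + d * E v"
  shows "ip f g = a * IA + (\<Sum>j\<in>UNIV. c j * IV j) + d * IE"
proof -
  have H0: "has_bochner_integral lborel (\<lambda>v. a * (A v * g v) + (\<Sum>j\<in>UNIV. c j * (V j v * g v)) + d * (E v * g v))
      (a * IA + (\<Sum>j\<in>UNIV. c j * IV j) + d * IE)"
    by (intro has_bochner_integral_add has_bochner_integral_mult_right has_bochner_integral_sum hA hV hE)
  have eq: "(\<lambda>v. a * (A v * g v) + (\<Sum>j\<in>UNIV. c j * (V j v * g v)) + d * (E v * g v))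
      = (\<lambda>v. (a * A v + (\<Sum>j\<in>UNIV. c j * V j v) + d * E v) * g v)"
    by (simp add: fun_eq_iff algebra_simps sum_distrib_right sum_distrib_left)
  have H: "has_bochner_integral lborel (\<lambda>v. (a * A v + (\<Sum>j\<in>UNIV. c j * V j v) + d * E v) * g v)
      (a * IA + (\<Sum>j\<in>UNIV. c j * IV j) + d * IE)"
    using H0 unfolding eq .
  have "ip f g = integral\<^sup>L lborel (\<lambda>v. (a * A v + (\<Sum>j\<in>UNIV. c j * V j v) + d * E v) * g v)"
    unfolding ip_def
  proof (rule integral_cong_AE)
    show "(\<lambda>v. f v * g v) \<in> borel_measurable lborel" using f g by measurable
    show "(\<lambda>v. (a * A v + (\<Sum>j\<in>UNIV. c j * V j v) + d * E v) * g v) \<in> borel_measurable lborel"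
      using H by (auto dest: has_bochner_integral_integrable)
    show "AE v in lborel. f v * g v = (a * A v + (\<Sum>j\<in>UNIV. c j * V j v) + d * E v) * g v"
      using ae by eventually_elim simp
  qed
  also have "\<dots> = a * IA + (\<Sum>j\<in>UNIV. c j * IV j) + d * IE"
    using H by (rule has_bochner_integral_integral_eq)
  finally show ?thesis .
qed

context
  fixes m n :: real
  assumes m: "m > 0" and n: "n > 0"
begin

lemma absM[simp]: "\<bar>Maxw m n v\<bar> = Maxw m n v"
  using Maxw_nonneg[of n m v] n by simp

lemma G_AA: "has_bochner_integral lborel (\<lambda>v. eA m n v * eA m n v) 1"
  by (rule hbi_scale[OF mom_const[OF m, of n], where c="1 / n"])
     (use n in \<open>simp_all add: eA_def\<close>)

lemma G_AV: "has_bochner_integral lborel (\<lambda>v. eA m n v * eV m n j v) 0"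
  by (rule hbi_scale[OF mom_lin[OF m, of j n], where c="sqrt (m / n) / sqrt n"])
     (use n in \<open>simp_all add: eA_def eV_def\<close>)

lemma G_AE: "has_bochner_integral lborel (\<lambda>v. eA m n v * eE m n v) 0"
proof -
  have "has_bochner_integral lborel (\<lambda>v. m * ((norm v)^2 * Maxw m n v) - 3 * Maxw m n v) (m * (3 * n / m) - 3 * n)"
    by (intro has_bochner_integral_diff has_bochner_integral_mult_right mom_n2 mom_const m)
  then show ?thesis
    apply (rule hbi_scale[where c="1 / (sqrt n * sqrt (6 * n))"])
    subgoal for v unfolding eA_def eE_def by (rule alg_AE[OF sqrtM]) (use n in \<open>simp_all add: less_imp_le\<close>)
    using m by simp
qed

lemma G_VV: "has_bochner_integral lborel (\<lambda>v. eV m n i v * eV m n j v) (if i = j then 1 else 0)"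
  apply (rule hbi_scale[OF mom_quad[OF m, of i j n], where c="m / n"])
  subgoal for v unfolding eV_def by (rule alg_VV[OF sqrtM]) (use n m in \<open>simp_all add: less_imp_le\<close>)
  using m n by simp

lemma G_VE: "has_bochner_integral lborel (\<lambda>v. eV m n j v * eE m n v) 0"
proof -
  have "has_bochner_integral lborel (\<lambda>v. m * (v$j * (norm v)^2 * Maxw m n v) - 3 * (v$j * Maxw m n v)) (m * 0 - 3 * 0)"
    by (intro has_bochner_integral_diff has_bochner_integral_mult_right mom_n2lin mom_lin m)
  then show ?thesis
    apply (rule hbi_scale[where c="sqrt (m / n) / sqrt (6 * n)"])
    subgoal for v unfolding eV_def eE_def by (rule alg_VE[OF sqrtM]) (use n in \<open>simp_all add: less_imp_le\<close>)
    by simp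
qed

lemma G_EE: "has_bochner_integral lborel (\<lambda>v. eE m n v * eE m n v) 1"
proof -
  have "has_bochner_integral lborel (\<lambda>v. m^2 * (((norm v)^2)^2 * Maxw m n v) - 6 * m * ((norm v)^2 * Maxw m n v) + 9 * Maxw m n v)
      (m^2 * (15 * n / m^2) - 6 * m * (3 * n / m) + 9 * n)"
    by (intro has_bochner_integral_add has_bochner_integral_diff has_bochner_integral_mult_right mom_n2 mom_n4 mom_const m)
  then show ?thesis
    apply (rule hbi_scale[where c="1 / (6 * n)"])
    subgoal for v unfolding eE_def by (rule alg_EE[OF sqrtM]) (use n in \<open>simp_all add: less_imp_le\<close>)
    using m n by (simp add: field_simps power2_eq_square)
qed

lemma G_VA: "has_bochner_integral lborel (\<lambda>v. eV m n j v * eA m n v) 0"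
  using G_AV[of j] by (simp add: mult.commute)
lemma G_EA: "has_bochner_integral lborel (\<lambda>v. eE m n v * eA m n v) 0"
  using G_AE by (simp add: mult.commute)
lemma G_EV: "has_bochner_integral lborel (\<lambda>v. eE m n v * eV m n j v) 0"
  using G_VE[of j] by (simp add: mult.commute)

lemma coef:
  assumes f: "f \<in> borel_measurable lborel"
    and ae: "AE v in lborel. f v = a * eA m n v + (\<Sum>j\<in>UNIV. c j * eV m n j v) + d * eE m n v"
  shows "ip f (eA m n) = a" "ip f (eV m n k) = c k" "ip f (eE m n) = d"
proof -
  have "ip f (eA m n) = a * 1 + (\<Sum>j\<in>UNIV. c j * 0) + d * 0"
    by (rule lin_ip[OF f meas_e(1) meas_e(1) meas_e(2) meas_e(3) G_AA G_VA G_EA ae])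
  then show "ip f (eA m n) = a" by simp
  have "ip f (eV m n k) = a * 0 + (\<Sum>j\<in>UNIV. c j * (if j = k then 1 else 0)) + d * 0"
    by (rule lin_ip[OF f meas_e(2) meas_e(1) meas_e(2) meas_e(3) G_AV G_VV G_EV ae])
  then show "ip f (eV m n k) = c k" by (simp add: if_distrib cong: if_cong)
  have "ip f (eE m n) = a * 0 + (\<Sum>j\<in>UNIV. c j * 0) + d * 1"
    by (rule lin_ip[OF f meas_e(3) meas_e(1) meas_e(2) meas_e(3) G_AE G_VE G_EE ae])
  then show "ip f (eE m n) = d" by simp
qed

lemma ker_species:
  assumes f: "f \<in> borel_measurable lborel" and N1: "N1 > 0" and N2: "N2 > 0"
    and ae: "AE v in lborel. N1 * (Proj m n f v - f v) + N2 * (Proj m n f v - f v)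
              + N2 * ((\<Sum>j\<in>UNIV. X j * eV m n j v) + Y * eE m n v) = 0"
  shows "(\<forall>j. X j = 0) \<and> Y = 0 \<and>
    (AE v in lborel. f v = ip f (eA m n) * eA m n v + (\<Sum>j\<in>UNIV. ip f (eV m n j) * eV m n j v) + ip f (eE m n) * eE m n v)"
proof -
  define r where "r = N2 / (N1 + N2)"
  have r: "r > 0" using N1 N2 by (simp add: r_def)
  have ae2: "AE v in lborel. f v = ip f (eA m n) * eA m n v + (\<Sum>j\<in>UNIV. (ip f (eV m n j) + r * X j) * eV m n j v)
      + (ip f (eE m n) + r * Y) * eE m n v"
    using ae
  proof eventually_elim
    case (elim v)
    have "f v = Proj m n f v + r * ((\<Sum>j\<in>UNIV. X j * eV m n j v) + Y * eE m n v)"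
      using elim N1 N2 unfolding r_def by (simp add: field_simps)
    then show ?case
      by (simp add: Proj_def algebra_simps sum.distrib sum_distrib_left)
  qed
  have X: "X k = 0" for k
    using coef(2)[OF f ae2, of k] r by simp
  have Y: "Y = 0"
    using coef(3)[OF f ae2] r by simp
  show ?thesis using X Y ae2 by simp
qed

lemma proj_id:
  assumes f: "f \<in> borel_measurable lborel"
    and ae: "AE v in lborel. f v = a * eA m n v + (\<Sum>j\<in>UNIV. c j * eV m n j v) + d * eE m n v"
  shows "AE v in lborel. Proj m n f v = f v"
  using ae by eventually_elim (simp add: Proj_def coef[OF f ae])

end



lemma sq1: "a > 0 \<Longrightarrow> b > 0 \<Longrightarrow> c > 0 \<Longrightarrow> d > 0 \<Longrightarrow> sqrt (a/b) * sqrt (c/d) * sqrt (d*b) = sqrt (c*a)"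
proof -
  assume "a > 0" "b > 0" "c > 0" "d > 0"
  then have "a/b*(c/d)*(d*b) = c*a" by (simp add: field_simps)
  then show ?thesis by (metis real_sqrt_mult)
qed

lemma sq2: "a > 0 \<Longrightarrow> b > 0 \<Longrightarrow> sqrt (a/b) * sqrt (6*b) = sqrt (6*a)"
proof -
  assume "a > 0" "b > 0"
  then have "a/b*(6*b) = 6*a" by (simp add: field_simps)
  then show ?thesis by (metis real_sqrt_mult)
qed

lemma sq3: "a > 0 \<Longrightarrow> b > 0 \<Longrightarrow> c > 0 \<Longrightarrow> d > 0 \<Longrightarrow> sqrt (a/b) * sqrt (c/d) * sqrt (c/a) = c / sqrt (b*d)"
proof -
  assume h: "a > 0" "b > 0" "c > 0" "d > 0"
  then have "a/b*(c/d)*(c/a) = c^2/(b*d)" by (simp add: field_simps power2_eq_square)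
  then have "sqrt (a/b) * sqrt (c/d) * sqrt (c/a) = sqrt (c^2/(b*d))" by (metis real_sqrt_mult)
  also have "\<dots> = c / sqrt (b*d)" using h by (simp add: real_sqrt_divide)
  finally show ?thesis .
qed

lemma sq4: "b > 0 \<Longrightarrow> d > 0 \<Longrightarrow> sqrt (d/b) = d / sqrt (b*d)"
proof -
  assume h: "b > 0" "d > 0"
  have "d / sqrt (b*d) = sqrt (d^2) / sqrt (b*d)" using h by simp
  also have "\<dots> = sqrt (d^2/(b*d))" by (simp add: real_sqrt_divide)
  also have "d^2/(b*d) = d/b" using h by (simp add: field_simps power2_eq_square)
  finally show ?thesis by simp
qed

lemma sq5: "a > 0 \<Longrightarrow> b > 0 \<Longrightarrow> sqrt (a/b) / sqrt (6*a) = 1 / sqrt (6*b)"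
proof -
  assume h: "a > 0" "b > 0"
  have e: "a/b/(6*a) = 1/(6*b)" using h by (simp add: field_simps)
  have "sqrt (a/b) / sqrt (6*a) = sqrt (a/b/(6*a))" by (simp only: real_sqrt_divide)
  also have "\<dots> = sqrt (1/(6*b))" by (simp only: e)
  also have "\<dots> = 1 / sqrt (6*b)" by (simp add: real_sqrt_divide)
  finally show ?thesis .
qed

lemma sq6: "m > 0 \<Longrightarrow> n > 0 \<Longrightarrow> sqrt (m*n) * sqrt (m/n) = m"
proof -
  assume h: "m > 0" "n > 0"
  have e: "m*n*(m/n) = m^2" using h by (simp add: field_simps power2_eq_square)
  have "sqrt (m*n) * sqrt (m/n) = sqrt (m*n*(m/n))" by (simp only: real_sqrt_mult)
  also have "\<dots> = sqrt (m^2)" by (simp only: e)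
  also have "\<dots> = m" using h by simp
  finally show ?thesis .
qed

theorem lemma3p2:
  fixes m1 m2 n10 n20 \<delta> \<omega> :: real
    and f1 f2 :: "real^3 \<Rightarrow> real"
  assumes "m1 \<ge> m2" "m2 > 0" "n10 > 0" "n20 > 0"
    and "0 \<le> \<delta>" "\<delta> < 1" "0 \<le> \<omega>" "\<omega> < 1"
    and "sq_integrable f1" "sq_integrable f2"
  shows "((AE v in lborel. Lop1 m1 m2 n10 n20 \<delta> \<omega> f1 f2 v = 0) \<and>
          (AE v in lborel. Lop2 m1 m2 n10 n20 \<delta> \<omega> f1 f2 v = 0))
    \<longleftrightarrow> (\<exists>a b d :: real. \<exists>c :: real^3.
          (AE v in lborel.
             f1 v = a * sqrt (Maxw m1 n10 v)
                    + (\<Sum>j\<in>UNIV. c $ j * (m1 * v $ j * sqrt (Maxw m1 n10 v)))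
                    + d * ((m1 * (norm v)\<^sup>2 - 3) * sqrt (Maxw m1 n10 v))
           \<and> f2 v = b * sqrt (Maxw m2 n20 v)
                    + (\<Sum>j\<in>UNIV. c $ j * (m2 * v $ j * sqrt (Maxw m2 n20 v)))
                    + d * ((m2 * (norm v)\<^sup>2 - 3) * sqrt (Maxw m2 n20 v))))"
proof -
  have m1: "m1 > 0" and m2: "m2 > 0" and n1: "n10 > 0" and n2: "n20 > 0"
    using assms by auto
  have d1: "1 - \<delta> > 0" and w1: "1 - \<omega> > 0" using assms by auto
  have f1m: "f1 \<in> borel_measurable lborel" using assms(9) by (simp add: sq_integrable_def)
  have f2m: "f2 \<in> borel_measurable lborel" using assms(10) by (simp add: sq_integrable_def)
  have L1eq: "Lop1 m1 m2 n10 n20 \<delta> \<omega> f1 f2 v =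
      n10 * (Proj m1 n10 f1 v - f1 v) + n20 * (Proj m1 n10 f1 v - f1 v)
      + n20 * ((\<Sum>j\<in>UNIV. ((1 - \<delta>) * (sqrt (n10 / n20) * sqrt (m1 / m2) * ip f2 (eV m2 n20 j) - ip f1 (eV m1 n10 j))) * eV m1 n10 j v)
          + ((1 - \<omega>) * (sqrt (n10 / n20) * ip f2 (eE m2 n20) - ip f1 (eE m1 n10))) * eE m1 n10 v)" for v
    unfolding Lop1_def by (simp add: sum_distrib_left mult.assoc)
  have L2eq: "Lop2 m1 m2 n10 n20 \<delta> \<omega> f1 f2 v =
      n20 * (Proj m2 n20 f2 v - f2 v) + n10 * (Proj m2 n20 f2 v - f2 v)
      + n10 * ((\<Sum>j\<in>UNIV. (m1 / m2 * (1 - \<delta>) * (sqrt (n20 / n10) * sqrt (m2 / m1) * ip f1 (eV m1 n10 j) - ip f2 (eV m2 n20 j))) * eV m2 n20 j v)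
          + ((1 - \<omega>) * (sqrt (n20 / n10) * ip f1 (eE m1 n10) - ip f2 (eE m2 n20))) * eE m2 n20 v)" for v
    unfolding Lop2_def by (simp add: sum_distrib_left mult.assoc)
  show ?thesis
  proof
    assume H: "(AE v in lborel. Lop1 m1 m2 n10 n20 \<delta> \<omega> f1 f2 v = 0) \<and>
          (AE v in lborel. Lop2 m1 m2 n10 n20 \<delta> \<omega> f1 f2 v = 0)"
    have A1: "AE v in lborel. n10 * (Proj m1 n10 f1 v - f1 v) + n20 * (Proj m1 n10 f1 v - f1 v)
      + n20 * ((\<Sum>j\<in>UNIV. ((1 - \<delta>) * (sqrt (n10 / n20) * sqrt (m1 / m2) * ip f2 (eV m2 n20 j) - ip f1 (eV m1 n10 j))) * eV m1 n10 j v)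
          + ((1 - \<omega>) * (sqrt (n10 / n20) * ip f2 (eE m2 n20) - ip f1 (eE m1 n10))) * eE m1 n10 v) = 0"
      using conjunct1[OF H] by eventually_elim (simp only: L1eq)
    have A2: "AE v in lborel. n20 * (Proj m2 n20 f2 v - f2 v) + n10 * (Proj m2 n20 f2 v - f2 v)
      + n10 * ((\<Sum>j\<in>UNIV. (m1 / m2 * (1 - \<delta>) * (sqrt (n20 / n10) * sqrt (m2 / m1) * ip f1 (eV m1 n10 j) - ip f2 (eV m2 n20 j))) * eV m2 n20 j v)
          + ((1 - \<omega>) * (sqrt (n20 / n10) * ip f1 (eE m1 n10) - ip f2 (eE m2 n20))) * eE m2 n20 v) = 0"
      using conjunct2[OF H] by eventually_elim (simp only: L2eq)
    note K1 = ker_species[OF m1 n1 f1m n1 n2 A1]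
    note K2 = ker_species[OF m2 n2 f2m n2 n1 A2]
    have rV: "ip f1 (eV m1 n10 j) = sqrt (n10 / n20) * sqrt (m1 / m2) * ip f2 (eV m2 n20 j)" for j
      using K1 d1 by auto
    have rE: "ip f1 (eE m1 n10) = sqrt (n10 / n20) * ip f2 (eE m2 n20)"
      using K1 w1 by auto
    have R1: "AE v in lborel. f1 v = ip f1 (eA m1 n10) * eA m1 n10 v + (\<Sum>j\<in>UNIV. ip f1 (eV m1 n10 j) * eV m1 n10 j v) + ip f1 (eE m1 n10) * eE m1 n10 v"
      using K1 by blast
    have R2: "AE v in lborel. f2 v = ip f2 (eA m2 n20) * eA m2 n20 v + (\<Sum>j\<in>UNIV. ip f2 (eV m2 n20 j) * eV m2 n20 j v) + ip f2 (eE m2 n20) * eE m2 n20 v"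
      using K2 by blast
    define a where "a = ip f1 (eA m1 n10) / sqrt n10"
    define b where "b = ip f2 (eA m2 n20) / sqrt n20"
    define d where "d = ip f2 (eE m2 n20) / sqrt (6 * n20)"
    define c :: "real^3" where "c = (\<chi> j. ip f2 (eV m2 n20 j) / sqrt (n20 * m2))"
    have hA1: "ip f1 (eA m1 n10) * eA m1 n10 v = a * sqrt (Maxw m1 n10 v)" for v
      unfolding a_def eA_def by simp
    have hA2: "ip f2 (eA m2 n20) * eA m2 n20 v = b * sqrt (Maxw m2 n20 v)" for v
      unfolding b_def eA_def by simp
    have hV1: "ip f1 (eV m1 n10 j) * eV m1 n10 j v = c $ j * (m1 * v $ j * sqrt (Maxw m1 n10 v))" for j v
    proof -
      have "ip f1 (eV m1 n10 j) * eV m1 n10 j v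
          = (sqrt (n10 / n20) * sqrt (m1 / m2) * sqrt (m1 / n10)) * ip f2 (eV m2 n20 j) * v $ j * sqrt (Maxw m1 n10 v)"
        unfolding rV eV_def by (simp only: mult_ac)
      also have "\<dots> = m1 / sqrt (n20 * m2) * ip f2 (eV m2 n20 j) * v $ j * sqrt (Maxw m1 n10 v)"
        by (simp only: sq3[OF n1 n2 m1 m2])
      finally show ?thesis unfolding c_def by simp
    qed
    have hV2: "ip f2 (eV m2 n20 j) * eV m2 n20 j v = c $ j * (m2 * v $ j * sqrt (Maxw m2 n20 v))" for j v
    proof -
      have "ip f2 (eV m2 n20 j) * eV m2 n20 j v
          = sqrt (m2 / n20) * ip f2 (eV m2 n20 j) * v $ j * sqrt (Maxw m2 n20 v)"
        unfolding eV_def by (simp only: mult_ac)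
      also have "\<dots> = m2 / sqrt (n20 * m2) * ip f2 (eV m2 n20 j) * v $ j * sqrt (Maxw m2 n20 v)"
        by (simp only: sq4[OF n2 m2])
      finally show ?thesis unfolding c_def by simp
    qed
    have hE1: "ip f1 (eE m1 n10) * eE m1 n10 v = d * ((m1 * (norm v)\<^sup>2 - 3) * sqrt (Maxw m1 n10 v))" for v
    proof -
      have "ip f1 (eE m1 n10) * eE m1 n10 v
          = (sqrt (n10 / n20) / sqrt (6 * n10)) * ip f2 (eE m2 n20) * ((m1 * (norm v)\<^sup>2 - 3) * sqrt (Maxw m1 n10 v))"
        unfolding rE eE_def by simp
      also have "\<dots> = 1 / sqrt (6 * n20) * ip f2 (eE m2 n20) * ((m1 * (norm v)\<^sup>2 - 3) * sqrt (Maxw m1 n10 v))"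
        by (simp only: sq5[OF n1 n2])
      finally show ?thesis unfolding d_def by simp
    qed
    have hE2: "ip f2 (eE m2 n20) * eE m2 n20 v = d * ((m2 * (norm v)\<^sup>2 - 3) * sqrt (Maxw m2 n20 v))" for v
      unfolding d_def eE_def by simp
    show "\<exists>a b d :: real. \<exists>c :: real^3.
          (AE v in lborel.
             f1 v = a * sqrt (Maxw m1 n10 v)
                    + (\<Sum>j\<in>UNIV. c $ j * (m1 * v $ j * sqrt (Maxw m1 n10 v)))
                    + d * ((m1 * (norm v)\<^sup>2 - 3) * sqrt (Maxw m1 n10 v))
           \<and> f2 v = b * sqrt (Maxw m2 n20 v)
                    + (\<Sum>j\<in>UNIV. c $ j * (m2 * v $ j * sqrt (Maxw m2 n20 v)))
                    + d * ((m2 * (norm v)\<^sup>2 - 3) * sqrt (Maxw m2 n20 v)))"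
    proof (intro exI)
      show "AE v in lborel.
             f1 v = a * sqrt (Maxw m1 n10 v)
                    + (\<Sum>j\<in>UNIV. c $ j * (m1 * v $ j * sqrt (Maxw m1 n10 v)))
                    + d * ((m1 * (norm v)\<^sup>2 - 3) * sqrt (Maxw m1 n10 v))
           \<and> f2 v = b * sqrt (Maxw m2 n20 v)
                    + (\<Sum>j\<in>UNIV. c $ j * (m2 * v $ j * sqrt (Maxw m2 n20 v)))
                    + d * ((m2 * (norm v)\<^sup>2 - 3) * sqrt (Maxw m2 n20 v))"
        using R1 R2 by eventually_elim (simp only: hA1 hA2 hV1 hV2 hE1 hE2)
    qed
  next
    assume "\<exists>a b d :: real. \<exists>c :: real^3.
          (AE v in lborel.
             f1 v = a * sqrt (Maxw m1 n10 v)
                    + (\<Sum>j\<in>UNIV. c $ j * (m1 * v $ j * sqrt (Maxw m1 n10 v)))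
                    + d * ((m1 * (norm v)\<^sup>2 - 3) * sqrt (Maxw m1 n10 v))
           \<and> f2 v = b * sqrt (Maxw m2 n20 v)
                    + (\<Sum>j\<in>UNIV. c $ j * (m2 * v $ j * sqrt (Maxw m2 n20 v)))
                    + d * ((m2 * (norm v)\<^sup>2 - 3) * sqrt (Maxw m2 n20 v)))"
    then obtain a b d :: real and c :: "real^3" where H: "AE v in lborel.
             f1 v = a * sqrt (Maxw m1 n10 v)
                    + (\<Sum>j\<in>UNIV. c $ j * (m1 * v $ j * sqrt (Maxw m1 n10 v)))
                    + d * ((m1 * (norm v)\<^sup>2 - 3) * sqrt (Maxw m1 n10 v))
           \<and> f2 v = b * sqrt (Maxw m2 n20 v)
                    + (\<Sum>j\<in>UNIV. c $ j * (m2 * v $ j * sqrt (Maxw m2 n20 v)))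
                    + d * ((m2 * (norm v)\<^sup>2 - 3) * sqrt (Maxw m2 n20 v))"
      by blast
    have cA: "x * sqrt (Maxw m n v) = (x * sqrt n) * eA m n v" if "n > 0" for x m n :: real and v
      using that unfolding eA_def by simp
    have cV: "x * (m * v $ j * sqrt (Maxw m n v)) = (x * sqrt (m * n)) * eV m n j v" if "n > 0" "m > 0" for x m n :: real and v j
    proof -
      have "(x * sqrt (m * n)) * eV m n j v = x * (sqrt (m * n) * sqrt (m / n)) * v $ j * sqrt (Maxw m n v)"
        unfolding eV_def by (simp only: mult_ac)
      also have "\<dots> = x * (m * v $ j * sqrt (Maxw m n v))" using sq6[OF that(2,1)] by simp
      finally show ?thesis by (rule sym)
    qed
    have cE: "x * ((m * (norm v)\<^sup>2 - 3) * sqrt (Maxw m n v)) = (x * sqrt (6 * n)) * eE m n v" if "n > 0" for x m n :: real and v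
      using that unfolding eE_def by simp
    have R1: "AE v in lborel. f1 v = (a * sqrt n10) * eA m1 n10 v + (\<Sum>j\<in>UNIV. (c $ j * sqrt (m1 * n10)) * eV m1 n10 j v) + (d * sqrt (6 * n10)) * eE m1 n10 v"
      using H
    proof eventually_elim
      case (elim v)
      have s: "(\<Sum>j\<in>UNIV. c $ j * (m1 * v $ j * sqrt (Maxw m1 n10 v))) = (\<Sum>j\<in>UNIV. (c $ j * sqrt (m1 * n10)) * eV m1 n10 j v)"
        by (rule sum.cong[OF refl]) (rule cV[OF n1 m1])
      have e1: "a * sqrt (Maxw m1 n10 v) = (a * sqrt n10) * eA m1 n10 v" by (rule cA[OF n1])
      have e3: "d * ((m1 * (norm v)\<^sup>2 - 3) * sqrt (Maxw m1 n10 v)) = (d * sqrt (6 * n10)) * eE m1 n10 v" by (rule cE[OF n1])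
      show ?case using elim unfolding s e1 e3 by blast
    qed
    have R2: "AE v in lborel. f2 v = (b * sqrt n20) * eA m2 n20 v + (\<Sum>j\<in>UNIV. (c $ j * sqrt (m2 * n20)) * eV m2 n20 j v) + (d * sqrt (6 * n20)) * eE m2 n20 v"
      using H
    proof eventually_elim
      case (elim v)
      have s: "(\<Sum>j\<in>UNIV. c $ j * (m2 * v $ j * sqrt (Maxw m2 n20 v))) = (\<Sum>j\<in>UNIV. (c $ j * sqrt (m2 * n20)) * eV m2 n20 j v)"
        by (rule sum.cong[OF refl]) (rule cV[OF n2 m2])
      have e1: "b * sqrt (Maxw m2 n20 v) = (b * sqrt n20) * eA m2 n20 v" by (rule cA[OF n2])
      have e3: "d * ((m2 * (norm v)\<^sup>2 - 3) * sqrt (Maxw m2 n20 v)) = (d * sqrt (6 * n20)) * eE m2 n20 v" by (rule cE[OF n2])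
      show ?case using elim unfolding s e1 e3 by blast
    qed
    note C1 = coef[OF m1 n1 f1m R1]
    note C2 = coef[OF m2 n2 f2m R2]
    have P1: "AE v in lborel. Proj m1 n10 f1 v = f1 v" by (rule proj_id[OF m1 n1 f1m R1])
    have P2: "AE v in lborel. Proj m2 n20 f2 v = f2 v" by (rule proj_id[OF m2 n2 f2m R2])
    have Z1: "sqrt (n10 / n20) * sqrt (m1 / m2) * ip f2 (eV m2 n20 j) - ip f1 (eV m1 n10 j) = 0" for j
    proof -
      have "sqrt (n10 / n20) * sqrt (m1 / m2) * ip f2 (eV m2 n20 j) - ip f1 (eV m1 n10 j)
          = c $ j * (sqrt (n10 / n20) * sqrt (m1 / m2) * sqrt (m2 * n20) - sqrt (m1 * n10))"
        unfolding C1 C2 by (simp add: algebra_simps)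
      also have "\<dots> = 0" by (simp add: sq1[OF n1 n2 m1 m2])
      finally show ?thesis .
    qed
    have Z2: "sqrt (n10 / n20) * ip f2 (eE m2 n20) - ip f1 (eE m1 n10) = 0"
    proof -
      have "sqrt (n10 / n20) * ip f2 (eE m2 n20) - ip f1 (eE m1 n10)
          = d * (sqrt (n10 / n20) * sqrt (6 * n20) - sqrt (6 * n10))"
        unfolding C1 C2 by (simp add: algebra_simps)
      also have "\<dots> = 0" by (simp add: sq2[OF n1 n2])
      finally show ?thesis .
    qed
    have Z3: "sqrt (n20 / n10) * sqrt (m2 / m1) * ip f1 (eV m1 n10 j) - ip f2 (eV m2 n20 j) = 0" for j
    proof -
      have "sqrt (n20 / n10) * sqrt (m2 / m1) * ip f1 (eV m1 n10 j) - ip f2 (eV m2 n20 j)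
          = c $ j * (sqrt (n20 / n10) * sqrt (m2 / m1) * sqrt (m1 * n10) - sqrt (m2 * n20))"
        unfolding C1 C2 by (simp add: algebra_simps)
      also have "\<dots> = 0" by (simp add: sq1[OF n2 n1 m2 m1])
      finally show ?thesis .
    qed
    have Z4: "sqrt (n20 / n10) * ip f1 (eE m1 n10) - ip f2 (eE m2 n20) = 0"
    proof -
      have "sqrt (n20 / n10) * ip f1 (eE m1 n10) - ip f2 (eE m2 n20)
          = d * (sqrt (n20 / n10) * sqrt (6 * n10) - sqrt (6 * n20))"
        unfolding C1 C2 by (simp add: algebra_simps)
      also have "\<dots> = 0" by (simp add: sq2[OF n2 n1])
      finally show ?thesis .
    qed
    show "(AE v in lborel. Lop1 m1 m2 n10 n20 \<delta> \<omega> f1 f2 v = 0) \<and>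
          (AE v in lborel. Lop2 m1 m2 n10 n20 \<delta> \<omega> f1 f2 v = 0)"
    proof
      show "AE v in lborel. Lop1 m1 m2 n10 n20 \<delta> \<omega> f1 f2 v = 0"
        using P1 by eventually_elim (simp add: L1eq Z1 Z2)
      show "AE v in lborel. Lop2 m1 m2 n10 n20 \<delta> \<omega> f1 f2 v = 0"
        using P2 by eventually_elim (simp add: L2eq Z3 Z4)
    qed
  qed
qed

end
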